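(* Let $ABC$ be a triangle and let $(P, P')$ and $(Q, Q')$ be two pairs of isogonal conjugates with respect to $ABC$. Then the center of the spiral similarity taking segment $PQ$ to segment $Q'P'$ (i.e. sending $P \mapsto Q'$ and $Q \mapsto P'$) lies on the circumcircle $(ABC)$.
   Context: A spiral similarity is a composition of a rotation and a homothety with a common center; its center is the "spiral center". *)

theory Defs
  imports "HOL-Analysis.Analysis"
begin

definition triangle :: "complex \<Rightarrow> complex \<Rightarrow> complex \<Rightarrow> bool" where
  "triangle A B C \<longleftrightarrow> \<not> collinear {A, B, C}"

definition off_sidelines :: "complex \<Rightarrow> complex \<Rightarrow> complex \<Rightarrow> complex \<Rightarrow> bool" where
  "off_sidelines A B C P \<longleftrightarrow>
     \<not> collinear {A, B, P} \<and> \<not> collinear {B, C, P} \<and> \<not> collinear {C, A, P}"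

text \<open>Lines VP and VP' are reflections of each other in the bisector of the angle
  of the triangle at vertex V, whose sides go to X and Y: directed angle condition
  arg(P-V) + arg(P'-V) = arg(X-V) + arg(Y-V) (mod pi).\<close>
definition isogonal_at :: "complex \<Rightarrow> complex \<Rightarrow> complex \<Rightarrow> complex \<Rightarrow> complex \<Rightarrow> bool" where
  "isogonal_at V X Y P P' \<longleftrightarrow> (P - V) * (P' - V) / ((X - V) * (Y - V)) \<in> \<real>"

definition isogonal_conjugates :: "complex \<Rightarrow> complex \<Rightarrow> complex \<Rightarrow> complex \<Rightarrow> complex \<Rightarrow> bool" where
  "isogonal_conjugates A B C P P' \<longleftrightarrow>
     off_sidelines A B C P \<and> off_sidelines A B C P' \<and>
     isogonal_at A B C P P' \<and> isogonal_at B C A P P' \<and> isogonal_at C A B P P'"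

definition spiral_center :: "complex \<Rightarrow> complex \<Rightarrow> complex \<Rightarrow> complex \<Rightarrow> complex \<Rightarrow> bool" where
  "spiral_center Z X Y X' Y' \<longleftrightarrow>
     (\<exists>a. a \<noteq> 0 \<and> a \<noteq> 1 \<and> X' - Z = a * (X - Z) \<and> Y' - Z = a * (Y - Z))"

definition on_circumcircle :: "complex \<Rightarrow> complex \<Rightarrow> complex \<Rightarrow> complex \<Rightarrow> bool" where
  "on_circumcircle A B C X \<longleftrightarrow>
     (\<exists>c r. dist A c = r \<and> dist B c = r \<and> dist C c = r \<and> dist X c = r)"

end

theory Submission
  imports Defs
begin

lemma iso_eq:
  fixes a b c p p' :: complex
  assumes ha: "cnj a = inverse a" and hb: "cnj b = inverse b" and hc: "cnj c = inverse c"
    and a0: "a \<noteq> 0" and b0: "b \<noteq> 0" and c0: "c \<noteq> 0"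
    and ab: "a \<noteq> b" and ac: "a \<noteq> c"
    and r: "(p-a)*(p'-a)/((b-a)*(c-a)) \<in> \<real>"
  shows "(p-a)*(p'-a) = b*c*(a*cnj p - 1)*(a*cnj p' - 1)"
proof -
  define D where "D = (b-a)*(c-a)"
  define N where "N = (p-a)*(p'-a)"
  have D0: "D \<noteq> 0" using ab ac by (auto simp: D_def)
  have cD: "cnj D = D / (a*a*b*c)" unfolding D_def using a0 b0 c0
    by (simp add: ha hb hc field_simps)
  have cN: "cnj N = (a*cnj p - 1)*(a*cnj p' - 1) / (a*a)" unfolding N_def using a0
    by (simp add: ha field_simps)
  have "cnj (N/D) = N/D" using r Reals_cnj_iff unfolding N_def D_def by blast
  hence "cnj N / cnj D = N / D" by simp
  moreover have "cnj N / cnj D = (a*cnj p - 1)*(a*cnj p' - 1) * (b*c) / D"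
    using a0 b0 c0 D0 unfolding cD cN by (simp add: divide_simps)
  ultimately have "(a*cnj p - 1)*(a*cnj p' - 1) * (b*c) / D = N / D" by simp
  hence "(a*cnj p - 1)*(a*cnj p' - 1) * (b*c) = N" using D0
    by (simp add: divide_cancel_right)
  thus ?thesis unfolding N_def by (simp add: algebra_simps)
qed

lemma iso_rel:
  fixes a b c p p' :: complex
  assumes ha: "cnj a = inverse a" and hb: "cnj b = inverse b" and hc: "cnj c = inverse c"
    and a0: "a \<noteq> 0" and b0: "b \<noteq> 0" and c0: "c \<noteq> 0"
    and ab: "a \<noteq> b" and ac: "a \<noteq> c" and bc: "b \<noteq> c"
    and rA: "(p-a)*(p'-a)/((b-a)*(c-a)) \<in> \<real>"
    and rB: "(p-b)*(p'-b)/((c-b)*(a-b)) \<in> \<real>"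
  shows "p + p' + a*b*c*(cnj p * cnj p') = a+b+c"
    and "p * p' + a*b*c*(cnj p + cnj p') = a*b+b*c+c*a"
proof -
  have eA: "(p-a)*(p'-a) = b*c*(a*cnj p - 1)*(a*cnj p' - 1)"
    by (rule iso_eq[OF ha hb hc a0 b0 c0 ab ac rA])
  have eB: "(p-b)*(p'-b) = c*a*(b*cnj p - 1)*(b*cnj p' - 1)"
    using iso_eq[OF hb hc ha b0 c0 a0 bc ab[symmetric] rB] .
  have "(a-b)*(a+b+c - (p+p') - a*b*c*(cnj p*cnj p')) = 0" using eA eB by algebra
  hence "a+b+c - (p+p') - a*b*c*(cnj p*cnj p') = 0" using ab by simp
  hence s: "p + p' + a*b*c*(cnj p * cnj p') = a+b+c" by (simp add: algebra_simps)
  thus "p + p' + a*b*c*(cnj p * cnj p') = a+b+c" .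
  show "p * p' + a*b*c*(cnj p + cnj p') = a*b+b*c+c*a" using eA s by algebra
qed

lemma norm_main:
  fixes a b c p p' q q' z k :: complex
  assumes ha: "cnj a = inverse a" and hb: "cnj b = inverse b" and hc: "cnj c = inverse c"
    and a0: "a \<noteq> 0" and b0: "b \<noteq> 0" and c0: "c \<noteq> 0"
    and ab: "a \<noteq> b" and ac: "a \<noteq> c" and bc: "b \<noteq> c"
    and pA: "(p-a)*(p'-a)/((b-a)*(c-a)) \<in> \<real>"
    and pB: "(p-b)*(p'-b)/((c-b)*(a-b)) \<in> \<real>"
    and qA: "(q-a)*(q'-a)/((b-a)*(c-a)) \<in> \<real>"
    and qB: "(q-b)*(q'-b)/((c-b)*(a-b)) \<in> \<real>"
    and pq: "p \<noteq> q" and k1: "k \<noteq> 1"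
    and s1: "q' - z = k*(p - z)" and s2: "p' - z = k*(q - z)"
  shows "z * cnj z = 1"
proof -
  note P = iso_rel[OF ha hb hc a0 b0 c0 ab ac bc pA pB]
  note Q = iso_rel[OF ha hb hc a0 b0 c0 ab ac bc qA qB]
  define e where "e = a*b*c"
  have e0: "e \<noteq> 0" using a0 b0 c0 by (simp add: e_def)
  have sd: "(p+p') - (q+q') = (p-q)*(1-k)" using s1 s2 by algebra
  have sd0: "(p+p') - (q+q') \<noteq> 0" using pq k1 by (simp add: sd)
  have zrel: "z*((p+p') - (q+q')) = p*p' - q*q'" using s1 s2 by algebra
  have S: "(p+p') - (q+q') = -e*(cnj p*cnj p' - cnj q*cnj q')" using P(1) Q(1) unfolding e_def by algebra
  have T: "p*p' - q*q' = -e*((cnj p + cnj p') - (cnj q + cnj q'))" using P(2) Q(2) unfolding e_def by algebra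
  have t0: "cnj p*cnj p' - cnj q*cnj q' \<noteq> 0" using sd0 S by auto
  have u0: "(cnj p + cnj p') - (cnj q + cnj q') \<noteq> 0"
  proof
    assume "(cnj p + cnj p') - (cnj q + cnj q') = 0"
    moreover have "cnj ((p+p') - (q+q')) = (cnj p + cnj p') - (cnj q + cnj q')" by simp
    ultimately have "cnj ((p+p') - (q+q')) = 0" by simp
    thus False using sd0 by (simp only: complex_cnj_zero_iff)
  qed
  have z1: "z * (cnj p*cnj p' - cnj q*cnj q') = (cnj p + cnj p') - (cnj q + cnj q')"
  proof -
    have "(-e) * (z * (cnj p*cnj p' - cnj q*cnj q')) = z * ((p+p') - (q+q'))"
      by (simp only: S) (simp add: algebra_simps)
    also have "\<dots> = (-e) * ((cnj p + cnj p') - (cnj q + cnj q'))" using zrel T by simp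
    finally show ?thesis using e0 by simp
  qed
  have "cnj (z*((p+p') - (q+q'))) = cnj (p*p' - q*q')" using zrel by simp
  hence z2: "cnj z * ((cnj p + cnj p') - (cnj q + cnj q')) = cnj p*cnj p' - cnj q*cnj q'" by simp
  have "(z * cnj z) * (((cnj p + cnj p') - (cnj q + cnj q')) * (cnj p*cnj p' - cnj q*cnj q'))
     = 1 * (((cnj p + cnj p') - (cnj q + cnj q')) * (cnj p*cnj p' - cnj q*cnj q'))"
    using z1 z2 by algebra
  thus ?thesis using t0 u0 by (simp only: mult_cancel_right) simp
qed

lemma unit_cnj: "cmod x = 1 \<Longrightarrow> cnj x = inverse (x::complex)"
proof -
  assume h: "cmod x = 1"
  have "x * cnj x = 1" using complex_norm_square[of x] h by simp
  thus ?thesis by (metis inverse_unique)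
qed

lemma scale_inv:
  fixes w m p p' a b c :: complex
  assumes "w \<noteq> 0"
  shows "((p-m)/w - (a-m)/w)*((p'-m)/w - (a-m)/w)/(((b-m)/w-(a-m)/w)*((c-m)/w-(a-m)/w))
       = (p-a)*(p'-a)/((b-a)*(c-a))"
proof -
  have e: "(x-m)/w - (a-m)/w = (x-a)/w" for x by (simp add: diff_divide_distrib)
  show ?thesis unfolding e using assms by (simp add: times_divide_times_eq)
qed

lemma circumcenter_exists:
  fixes A B C :: complex
  assumes "\<not> collinear {A, B, C}"
  shows "\<exists>M. cmod (A - M) = cmod (B - M) \<and> cmod (C - M) = cmod (B - M)"
proof -
  define b0 where "b0 = A - B"
  define c0 where "c0 = C - B"
  have nc: "c0 / b0 \<notin> \<real>" using assms collinear_3[of A B C] collinear_iff_Reals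
    unfolding b0_def c0_def by (metis NO_MATCH_def)
  have b00: "b0 \<noteq> 0" using nc by auto
  define D where "D = cnj b0 * c0 - b0 * cnj c0"
  have D0: "D \<noteq> 0"
  proof
    assume "D = 0"
    hence e: "cnj c0 * b0 = c0 * cnj b0" unfolding D_def by (simp add: algebra_simps)
    have "cnj (c0 / b0) = c0 / b0" using b00 e by (simp add: field_simps)
    thus False using nc Reals_cnj_iff by blast
  qed
  have cD: "cnj D = - D" unfolding D_def by (simp add: algebra_simps)
  define o0 where "o0 = (b0 * cnj b0 * c0 - c0 * cnj c0 * b0) / D"
  have co0: "cnj o0 = - (cnj b0 * b0 * cnj c0 - cnj c0 * c0 * cnj b0) / D"
    unfolding o0_def by (simp add: cD minus_divide_left)
  have "(b0 - o0) * cnj (b0 - o0) = o0 * cnj o0"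
  proof -
    have "b0 * cnj o0 + cnj b0 * o0 = (b0 * (- (cnj b0 * b0 * cnj c0 - cnj c0 * c0 * cnj b0)) + cnj b0 * (b0 * cnj b0 * c0 - c0 * cnj c0 * b0)) / D"
      unfolding co0 unfolding o0_def by (simp add: add_divide_distrib cD)
    also have "\<dots> = (b0 * cnj b0 * D) / D" unfolding D_def by (simp add: algebra_simps)
    also have "\<dots> = b0 * cnj b0" using D0 by simp
    finally have "b0 * cnj b0 = b0 * cnj o0 + cnj b0 * o0" by simp
    thus ?thesis by (simp add: algebra_simps)
  qed
  hence hA: "cmod (b0 - o0) = cmod o0"
    by (metis complex_norm_square norm_ge_zero of_real_eq_iff power2_eq_iff_nonneg)
  have "(c0 - o0) * cnj (c0 - o0) = o0 * cnj o0"
  proof -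
    have "c0 * cnj o0 + cnj c0 * o0 = (c0 * (- (cnj b0 * b0 * cnj c0 - cnj c0 * c0 * cnj b0)) + cnj c0 * (b0 * cnj b0 * c0 - c0 * cnj c0 * b0)) / D"
      unfolding co0 unfolding o0_def by (simp add: add_divide_distrib cD)
    also have "\<dots> = (c0 * cnj c0 * D) / D" unfolding D_def by (simp add: algebra_simps)
    also have "\<dots> = c0 * cnj c0" using D0 by simp
    finally have "c0 * cnj c0 = c0 * cnj o0 + cnj c0 * o0" by simp
    thus ?thesis by (simp add: algebra_simps)
  qed
  hence hC: "cmod (c0 - o0) = cmod o0"
    by (metis complex_norm_square norm_ge_zero of_real_eq_iff power2_eq_iff_nonneg)
  show ?thesis
    apply (rule exI[of _ "B + o0"])
    using hA hC unfolding b0_def c0_def by (simp add: algebra_simps)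
qed


theorem lemma2p3:
  fixes A B C P P' Q Q' Z :: complex
  assumes "triangle A B C"
    and "isogonal_conjugates A B C P P'"
    and "isogonal_conjugates A B C Q Q'"
    and "P \<noteq> Q"
    and "spiral_center Z P Q Q' P'"
  shows "on_circumcircle A B C Z"
proof -
  have nc: "\<not> collinear {A, B, C}" using assms(1) unfolding triangle_def .
  have ab: "A \<noteq> B" using nc by auto
  have ac: "A \<noteq> C"
  proof
    assume "A = C"
    hence "{A, B, C} = {B, C}" by auto
    thus False using nc collinear_2 by metis
  qed
  have bc: "B \<noteq> C" using nc by auto
  obtain M where hA: "cmod (A - M) = cmod (B - M)" and hC: "cmod (C - M) = cmod (B - M)"
    using circumcenter_exists[OF nc] by blast
  define w where "w = B - M"
  have w0: "w \<noteq> 0"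
  proof
    assume "w = 0"
    hence "cmod (A - M) = 0" "B = M" using hA unfolding w_def by auto
    thus False using ab by simp
  qed
  define f where "f x = (x - M) / w" for x
  have fd: "f x - f y = (x - y) / w" for x y unfolding f_def by (simp add: diff_divide_distrib)
  have fn: "cmod (f x) = cmod (x - M) / cmod w" for x unfolding f_def by (simp add: norm_divide)
  have nA: "cmod (f A) = 1" using fn[of A] hA w0 unfolding w_def by simp
  have nB: "cmod (f B) = 1" using fn[of B] w0 unfolding w_def by simp
  have nC: "cmod (f C) = 1" using fn[of C] hC w0 unfolding w_def by simp
  have nz: "x \<noteq> 0" if "cmod x = 1" for x using that by auto
  have finj: "f x \<noteq> f y" if "x \<noteq> y" for x y
  proof
    assume "f x = f y"
    hence "(x - y) / w = 0" using fd[of x y] by simp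
    thus False using that w0 by simp
  qed
  have iso: "(f p - f a)*(f p' - f a)/((f b - f a)*(f c - f a)) = (p-a)*(p'-a)/((b-a)*(c-a))"
    for p p' a b c unfolding f_def by (rule scale_inv[OF w0])
  obtain k where k0: "k \<noteq> 0" and k1: "k \<noteq> 1" and s1: "Q' - Z = k * (P - Z)"
    and s2: "P' - Z = k * (Q - Z)"
    using assms(5) unfolding spiral_center_def by blast
  have s1': "f Q' - f Z = k * (f P - f Z)" unfolding fd s1 by simp
  have s2': "f P' - f Z = k * (f Q - f Z)" unfolding fd s2 by simp
  have "f Z * cnj (f Z) = 1"
    apply (rule norm_main[OF unit_cnj[OF nA] unit_cnj[OF nB] unit_cnj[OF nC]
          nz[OF nA] nz[OF nB] nz[OF nC] finj[OF ab] finj[OF ac] finj[OF bc] _ _ _ _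
          finj[OF assms(4)] k1 s1' s2'])
    unfolding iso using assms(2,3) unfolding isogonal_conjugates_def isogonal_at_def by auto
  hence "complex_of_real ((cmod (f Z))\<^sup>2) = 1" by (simp only: complex_norm_square)
  hence h2: "(cmod (f Z))\<^sup>2 = 1" by (simp only: of_real_eq_1_iff)
  have "cmod (f Z) = 1" using h2 norm_ge_zero[of "f Z"] by (auto simp: power2_eq_1_iff)
  hence nZ: "cmod (Z - M) = cmod w" using fn[of Z] w0 by (simp add: field_simps)
  show ?thesis unfolding on_circumcircle_def
    apply (rule exI[of _ M], rule exI[of _ "cmod w"])
    using hA hC nZ unfolding dist_norm w_def by simp
qed

end
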